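(* For all integers $k\ge 1$ and $\Delta\ge 3$, there exists a connected graph $G_{k,\Delta}$ with maximum degree $\Delta$ satisfying $\gamma_c(G_{k,\Delta})=k$ and $F_c(G_{k,\Delta})=\gamma_c(G_{k,\Delta})(\Delta-2)+2$.
   Context: Forcing process: given a set of initially colored vertices, at each step a colored vertex with exactly one non-colored neighbor forces (colors) that neighbor. A set $S\subseteq V(G)$ is a forcing set if iterating this process from $S$ eventually colors all vertices; it is a connected forcing set if moreover the induced subgraph $G[S]$ is connected. $F_c(G)$ is the minimum cardinality of a connected forcing set of $G$. A connected dominating set is a set $D\subseteq V(G)$ such that every vertex outside $D$ has a neighbor in $D$ and $G[D]$ is connected; $\gamma_c(G)$ is the minimum cardinality of a connected dominating set. *)

theory Defs
  imports Main
begin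

definition graph :: "'a set \<Rightarrow> ('a \<Rightarrow> 'a \<Rightarrow> bool) \<Rightarrow> bool" where
  "graph V E \<longleftrightarrow> finite V \<and> (\<forall>u v. E u v \<longrightarrow> u \<in> V \<and> v \<in> V)
     \<and> (\<forall>u v. E u v \<longrightarrow> E v u) \<and> (\<forall>v. \<not> E v v)"

definition nbhd :: "'a set \<Rightarrow> ('a \<Rightarrow> 'a \<Rightarrow> bool) \<Rightarrow> 'a \<Rightarrow> 'a set" where
  "nbhd V E v = {u \<in> V. E v u}"

definition degree :: "'a set \<Rightarrow> ('a \<Rightarrow> 'a \<Rightarrow> bool) \<Rightarrow> 'a \<Rightarrow> nat" where
  "degree V E v = card (nbhd V E v)"

definition max_degree_eq :: "'a set \<Rightarrow> ('a \<Rightarrow> 'a \<Rightarrow> bool) \<Rightarrow> nat \<Rightarrow> bool" where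
  "max_degree_eq V E d \<longleftrightarrow> (\<forall>v\<in>V. degree V E v \<le> d) \<and> (\<exists>v\<in>V. degree V E v = d)"

definition connected_on :: "'a set \<Rightarrow> ('a \<Rightarrow> 'a \<Rightarrow> bool) \<Rightarrow> 'a set \<Rightarrow> bool" where
  "connected_on V E S \<longleftrightarrow> S \<noteq> {} \<and> S \<subseteq> V \<and>
     (\<forall>u\<in>S. \<forall>v\<in>S. (\<lambda>x y. x \<in> S \<and> y \<in> S \<and> E x y)\<^sup>*\<^sup>* u v)"

definition connected_graph :: "'a set \<Rightarrow> ('a \<Rightarrow> 'a \<Rightarrow> bool) \<Rightarrow> bool" where
  "connected_graph V E \<longleftrightarrow> graph V E \<and> connected_on V E V"

inductive_set forcing_closure :: "'a set \<Rightarrow> ('a \<Rightarrow> 'a \<Rightarrow> bool) \<Rightarrow> 'a set \<Rightarrow> 'a set"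
  for V E S where
  init: "v \<in> S \<Longrightarrow> v \<in> forcing_closure V E S"
| force: "\<lbrakk> v \<in> forcing_closure V E S; w \<in> nbhd V E v;
            \<forall>u\<in>nbhd V E v. u \<noteq> w \<longrightarrow> u \<in> forcing_closure V E S \<rbrakk>
          \<Longrightarrow> w \<in> forcing_closure V E S"

definition forcing_set :: "'a set \<Rightarrow> ('a \<Rightarrow> 'a \<Rightarrow> bool) \<Rightarrow> 'a set \<Rightarrow> bool" where
  "forcing_set V E S \<longleftrightarrow> S \<subseteq> V \<and> V \<subseteq> forcing_closure V E S"

definition connected_forcing_set :: "'a set \<Rightarrow> ('a \<Rightarrow> 'a \<Rightarrow> bool) \<Rightarrow> 'a set \<Rightarrow> bool" where
  "connected_forcing_set V E S \<longleftrightarrow> forcing_set V E S \<and> connected_on V E S"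

definition connected_forcing_number :: "'a set \<Rightarrow> ('a \<Rightarrow> 'a \<Rightarrow> bool) \<Rightarrow> nat" where
  "connected_forcing_number V E = (LEAST n. \<exists>S. connected_forcing_set V E S \<and> card S = n)"

definition connected_dominating_set :: "'a set \<Rightarrow> ('a \<Rightarrow> 'a \<Rightarrow> bool) \<Rightarrow> 'a set \<Rightarrow> bool" where
  "connected_dominating_set V E D \<longleftrightarrow> D \<subseteq> V \<and> connected_on V E D \<and>
     (\<forall>v\<in>V - D. \<exists>u\<in>D. E v u)"

definition connected_domination_number :: "'a set \<Rightarrow> ('a \<Rightarrow> 'a \<Rightarrow> bool) \<Rightarrow> nat" where
  "connected_domination_number V E = (LEAST n. \<exists>D. connected_dominating_set V E D \<and> card D = n)"

end

theory Submission imports Defs begin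


lemma rtc_sym:
  assumes "\<And>x y. R x y \<Longrightarrow> R y x" and "R\<^sup>*\<^sup>* a b"
  shows "R\<^sup>*\<^sup>* b a"
  using assms(2)
proof (induction rule: rtranclp_induct)
  case base then show ?case by simp
next
  case (step y z) then show ?case
    using assms(1) by (meson converse_rtranclp_into_rtranclp)
qed

lemma conn_step:
  assumes "connected_on V E D" "x \<in> D" "y \<in> D" "x \<noteq> y"
  shows "\<exists>z\<in>D. E x z"
proof -
  have "(\<lambda>a b. a \<in> D \<and> b \<in> D \<and> E a b)\<^sup>*\<^sup>* x y" using assms unfolding connected_on_def by blast
  then show ?thesis using assms(4) by (cases rule: converse_rtranclpE) auto
qed

lemma conn_root:
  assumes g: "graph V E" and "S \<subseteq> V" "r \<in> S"
    and reach: "\<And>x. x \<in> S \<Longrightarrow> (\<lambda>a b. a \<in> S \<and> b \<in> S \<and> E a b)\<^sup>*\<^sup>* x r"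
  shows "connected_on V E S"
proof -
  let ?R = "\<lambda>a b. a \<in> S \<and> b \<in> S \<and> E a b"
  have sym: "\<And>a b. ?R a b \<Longrightarrow> ?R b a" using g unfolding graph_def by blast
  have "?R\<^sup>*\<^sup>* u v" if "u \<in> S" "v \<in> S" for u v
    using reach[OF that(1)] rtc_sym[OF sym reach[OF that(2)]] by (meson rtranclp_trans)
  then show ?thesis using assms unfolding connected_on_def by blast
qed

lemma closure_two_leaves:
  assumes g: "graph V E" and nx: "nbhd V E x = {p}" and ny: "nbhd V E y = {p}"
    and xy: "x \<noteq> y" and xS: "x \<notin> S" and yS: "y \<notin> S"
  shows "x \<notin> forcing_closure V E S"
proof -
  have Exy: "E p x" "E p y" using nx ny g unfolding nbhd_def graph_def by blast+
  have pV: "p \<in> V" using nx unfolding nbhd_def by blast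
  have xn: "x \<in> nbhd V E p" "y \<in> nbhd V E p" using Exy g unfolding nbhd_def graph_def by blast+
  have "z \<noteq> x \<and> z \<noteq> y" if "z \<in> forcing_closure V E S" for z
    using that
  proof (induction rule: forcing_closure.induct)
    case (init v) then show ?case using xS yS by blast
  next
    case (force v w)
    have vE: "E v w" using force.hyps(2) unfolding nbhd_def by blast
    have vV: "v \<in> V" using vE g unfolding graph_def by blast
    show ?case
    proof (intro conjI notI)
      assume "w = x"
      then have "v \<in> nbhd V E x" using vE vV g unfolding nbhd_def graph_def by blast
      then have "v = p" using nx by blast
      then show False using force.IH(2) xn xy \<open>w = x\<close> by auto
    next
      assume "w = y"
      then have "v \<in> nbhd V E y" using vE vV g unfolding nbhd_def graph_def by blast
      then have "v = p" using ny by blast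
      then show False using force.IH(2) xn xy \<open>w = y\<close> by auto
    qed
  qed
  then show ?thesis by blast
qed



definition VV :: "nat \<Rightarrow> nat \<Rightarrow> nat set" where "VV k m = {..<k+2+k*m}"
definition lf :: "nat \<Rightarrow> nat \<Rightarrow> bool" where "lf k x \<longleftrightarrow> x = 0 \<or> x = k+1 \<or> k+2 \<le> x"
definition par :: "nat \<Rightarrow> nat \<Rightarrow> nat \<Rightarrow> nat" where
  "par k m x = (if x = 0 then 1 else if x = k+1 then k else 1 + (x-(k+2)) div m)"
definition lnk :: "nat \<Rightarrow> nat \<Rightarrow> nat \<Rightarrow> nat \<Rightarrow> bool" where
  "lnk k m u v \<longleftrightarrow> (lf k u \<and> v = par k m u) \<or> (1 \<le> u \<and> v = u+1 \<and> v \<le> k)"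
definition EE :: "nat \<Rightarrow> nat \<Rightarrow> nat \<Rightarrow> nat \<Rightarrow> bool" where
  "EE k m u v \<longleftrightarrow> u \<in> VV k m \<and> v \<in> VV k m \<and> (lnk k m u v \<or> lnk k m v u)"

context fixes k m :: nat assumes k1: "k \<ge> 1" and m1: "m \<ge> 1"
begin

lemma par_pend: "par k m (k+2+i*m+j) = i+1" if "j < m"
proof -
  have "(i*m+j) div m = i" using that m1 by simp
  then show ?thesis unfolding par_def by simp
qed

lemma par_range: assumes "lf k x" "x \<in> VV k m" shows "1 \<le> par k m x \<and> par k m x \<le> k"
proof -
  { assume x: "k+2 \<le> x"
    then have "x - (k+2) < k*m" using assms(2) unfolding VV_def by auto
    then have "(x-(k+2)) div m < k" by (simp add: less_mult_imp_div_less mult.commute)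
    then have ?thesis using x unfolding par_def by auto }
  then show ?thesis using assms k1 unfolding lf_def par_def by auto
qed

lemma graphV: "graph (VV k m) (EE k m)"
proof -
  have irr: "\<not> lnk k m x x" if "x \<in> VV k m" for x
  proof
    assume "lnk k m x x"
    then have "lf k x \<and> x = par k m x" unfolding lnk_def by auto
    then show False using par_range[of x] that unfolding lf_def by auto
  qed
  have "finite (VV k m)" unfolding VV_def by simp
  moreover have "\<forall>u v. EE k m u v \<longrightarrow> u \<in> VV k m \<and> v \<in> VV k m" unfolding EE_def by blast
  moreover have "\<forall>u v. EE k m u v \<longrightarrow> EE k m v u" unfolding EE_def by blast
  moreover have "\<forall>v. \<not> EE k m v v" using irr unfolding EE_def by blast
  ultimately show ?thesis unfolding graph_def by blast
qed

lemma nbhd_leaf: assumes "lf k x" "x \<in> VV k m" shows "nbhd (VV k m) (EE k m) x = {par k m x}"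
proof -
  have pr: "1 \<le> par k m x" "par k m x \<le> k" using par_range[OF assms] by auto
  have pV: "par k m x \<in> VV k m" using pr unfolding VV_def by auto
  have eq: "y = par k m x" if "EE k m x y" for y
  proof -
    have yV: "y \<in> VV k m" and E: "lnk k m x y \<or> lnk k m y x" using that unfolding EE_def by auto
    have nx: "\<not> (1 \<le> x \<and> x \<le> k)" using assms(1) unfolding lf_def by auto
    show ?thesis
    proof (cases "lnk k m x y")
      case True then show ?thesis using nx unfolding lnk_def by auto
    next
      case False
      then have L: "lnk k m y x" using E by blast
      show ?thesis
      proof (cases "lf k y")
        case True
        then have "1 \<le> par k m y \<and> par k m y \<le> k" using par_range yV by blast
        then show ?thesis using L nx unfolding lnk_def by auto
      next
        case False then show ?thesis using L nx unfolding lnk_def by auto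
      qed
    qed
  qed
  have "EE k m x (par k m x)" using assms pV unfolding EE_def lnk_def by auto
  then show ?thesis using pV eq unfolding nbhd_def by blast
qed

lemma nbhd_int: assumes "1 \<le> i" "i \<le> k"
  shows "nbhd (VV k m) (EE k m) i = {i-1, i+1} \<union> {k+2+(i-1)*m ..< k+2+i*m}"
proof (intro set_eqI iffI)
  fix y assume "y \<in> nbhd (VV k m) (EE k m) i"
  then have yV: "y \<in> VV k m" and E: "lnk k m i y \<or> lnk k m y i" unfolding nbhd_def EE_def by auto
  have nl: "\<not> lf k i" using assms unfolding lf_def by auto
  show "y \<in> {i-1, i+1} \<union> {k+2+(i-1)*m ..< k+2+i*m}"
  proof (cases "k+2 \<le> y")
    case True
    then have "par k m y = i" using E nl assms unfolding lnk_def lf_def by auto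
    then have "(y-(k+2)) div m = i - 1" using True unfolding par_def by auto
    moreover have "(y-(k+2)) div m * m \<le> y-(k+2)" by (rule div_times_less_eq_dividend)
    moreover have "y-(k+2) < m + (y-(k+2)) div m * m"
    proof -
      have "(y-(k+2)) div m * m + (y-(k+2)) mod m = y-(k+2)" by (rule div_mult_mod_eq)
      moreover have "(y-(k+2)) mod m < m" using m1 by simp
      ultimately show ?thesis by linarith
    qed
    moreover have "i*m = (i-1)*m + m" using assms by (cases i) auto
    ultimately have "(i-1)*m \<le> y-(k+2) \<and> y-(k+2) < i*m" by auto
    then show ?thesis using True by auto
  next
    case False
    then show ?thesis using E nl assms unfolding lnk_def lf_def par_def by (auto split: if_splits)
  qed
next
  fix y assume y: "y \<in> {i-1, i+1} \<union> {k+2+(i-1)*m ..< k+2+i*m}"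
  have iV: "i \<in> VV k m" using assms unfolding VV_def by auto
  have im: "i*m \<le> k*m" using assms by simp
  have "y \<le> k+1 \<or> y < k+2+i*m" using y assms by auto
  then have "y < k+2+k*m" using im by linarith
  then have yV: "y \<in> VV k m" unfolding VV_def by simp
  have "lnk k m i y \<or> lnk k m y i"
  proof (cases "y \<in> {i-1, i+1}")
    case True then show ?thesis using assms unfolding lnk_def lf_def par_def by auto
  next
    case False
    define j where "j = y - (k+2+(i-1)*m)"
    have "i*m = (i-1)*m + m" using assms by (cases i) auto
    then have j: "j < m" "y = k+2+(i-1)*m+j" using y False unfolding j_def by auto
    then have "par k m y = i" using par_pend[OF j(1), of "i-1"] assms by simp
    then show ?thesis using j unfolding lnk_def lf_def by auto
  qed
  then show "y \<in> nbhd (VV k m) (EE k m) i" using yV iV unfolding nbhd_def EE_def by auto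
qed


lemma nonleaf: "\<not> lf k x \<Longrightarrow> 1 \<le> x \<and> x \<le> k" unfolding lf_def by auto
lemma int_nonleaf: "1 \<le> x \<Longrightarrow> x \<le> k \<Longrightarrow> \<not> lf k x" unfolding lf_def by auto
lemma int_V: "x \<le> k \<Longrightarrow> x \<in> VV k m" unfolding VV_def by auto

lemma EE_leaf: "lf k x \<Longrightarrow> x \<in> VV k m \<Longrightarrow> EE k m x (par k m x)"
  using par_range[of x] int_V unfolding EE_def lnk_def by blast

lemma EE_int: "1 \<le> j \<Longrightarrow> j+1 \<le> k \<Longrightarrow> EE k m (j+1) j"
  using int_V[of j] int_V[of "j+1"] unfolding EE_def lnk_def by auto

lemma reach_int:
  assumes "{1..k} \<subseteq> T" "1 \<le> i" "i \<le> k"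
  shows "(\<lambda>a b. a\<in>T \<and> b\<in>T \<and> EE k m a b)\<^sup>*\<^sup>* i 1"
  using assms(2,3)
proof (induction i)
  case 0 then show ?case by simp
next
  case (Suc j)
  show ?case
  proof (cases "j = 0")
    case True then show ?thesis by simp
  next
    case False
    then have "(\<lambda>a b. a\<in>T \<and> b\<in>T \<and> EE k m a b)\<^sup>*\<^sup>* j 1" using Suc by auto
    moreover have "Suc j \<in> T" "j \<in> T" using assms(1) Suc False by auto
    moreover have "EE k m (j+1) j" using EE_int[of j] Suc False by auto
    ultimately show ?thesis by (simp add: converse_rtranclp_into_rtranclp)
  qed
qed

lemma reach:
  assumes "T \<subseteq> VV k m" "{1..k} \<subseteq> T" "x \<in> T"
  shows "(\<lambda>a b. a\<in>T \<and> b\<in>T \<and> EE k m a b)\<^sup>*\<^sup>* x 1"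
proof (cases "lf k x")
  case False then show ?thesis using reach_int[OF assms(2)] nonleaf by blast
next
  case True
  have xV: "x \<in> VV k m" using assms by blast
  have p: "1 \<le> par k m x" "par k m x \<le> k" using par_range[OF True xV] by auto
  then have pT: "par k m x \<in> T" using assms(2) by auto
  have "(\<lambda>a b. a\<in>T \<and> b\<in>T \<and> EE k m a b)\<^sup>*\<^sup>* (par k m x) 1"
    using reach_int[OF assms(2) p] .
  moreover have "EE k m x (par k m x)" using EE_leaf[OF True xV] .
  ultimately show ?thesis using pT assms(3) by (simp add: converse_rtranclp_into_rtranclp)
qed

lemma conn_T:
  assumes "T \<subseteq> VV k m" "{1..k} \<subseteq> T"
  shows "connected_on (VV k m) (EE k m) T"
proof (rule conn_root[OF graphV assms(1)])
  show "1 \<in> T" using assms(2) k1 by auto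
  show "\<And>x. x \<in> T \<Longrightarrow> (\<lambda>a b. a \<in> T \<and> b \<in> T \<and> EE k m a b)\<^sup>*\<^sup>* x 1"
    using reach[OF assms] .
qed

lemma degree_int: assumes "1 \<le> i" "i \<le> k" shows "degree (VV k m) (EE k m) i = m + 2"
proof -
  have "card ({i-1, i+1} \<union> {k+2+(i-1)*m ..< k+2+i*m}) = card {i-1, i+1} + card {k+2+(i-1)*m ..< k+2+i*m}"
    by (rule card_Un_disjoint) (use assms in auto)
  moreover have "card {i-1, i+1} = 2" using assms by auto
  moreover have "i*m = (i-1)*m + m" using assms by (cases i) auto
  ultimately show ?thesis unfolding degree_def nbhd_int[OF assms] by simp
qed

lemma degree_leaf: assumes "lf k x" "x \<in> VV k m" shows "degree (VV k m) (EE k m) x = 1"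
  unfolding degree_def nbhd_leaf[OF assms] by simp

lemma maxdeg: "max_degree_eq (VV k m) (EE k m) (m+2)"
  unfolding max_degree_eq_def
proof
  show "\<forall>v\<in>VV k m. degree (VV k m) (EE k m) v \<le> m + 2"
  proof
    fix v assume v: "v \<in> VV k m"
    show "degree (VV k m) (EE k m) v \<le> m + 2"
    proof (cases "lf k v")
      case True then show ?thesis using degree_leaf v by simp
    next
      case False then show ?thesis using degree_int nonleaf by simp
    qed
  qed
  show "\<exists>v\<in>VV k m. degree (VV k m) (EE k m) v = m + 2"
    using degree_int[of 1] int_V[of 1] k1 by auto
qed

lemma connG: "connected_graph (VV k m) (EE k m)"
proof -
  have "{1..k} \<subseteq> VV k m" using int_V by auto
  then show ?thesis unfolding connected_graph_def using graphV conn_T[of "VV k m"] by auto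
qed


lemma pend_V: assumes "i < k" "j < m" shows "k+2+i*m+j \<in> VV k m"
proof -
  have "i*m + j < k*m"
  proof -
    have "(i+1)*m \<le> k*m" using assms(1) by (intro mult_le_mono1) simp
    then show ?thesis using assms(2) by simp
  qed
  then show ?thesis unfolding VV_def by simp
qed

lemma pend_lf: "lf k (k+2+x)" unfolding lf_def by simp

lemma cds0: "connected_dominating_set (VV k m) (EE k m) {1..k}"
proof -
  have sub: "{1..k} \<subseteq> VV k m" using int_V by auto
  have "\<exists>u\<in>{1..k}. EE k m v u" if "v \<in> VV k m - {1..k}" for v
  proof -
    have l: "lf k v" using that nonleaf by force
    then show ?thesis using EE_leaf[OF l] par_range[OF l] that by auto
  qed
  then show ?thesis unfolding connected_dominating_set_def using sub conn_T[OF sub] by blast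
qed

lemma cds_lower: assumes D: "connected_dominating_set (VV k m) (EE k m) D" shows "{1..k} \<subseteq> D"
proof
  fix i assume i: "i \<in> {1..k}"
  show "i \<in> D"
  proof (rule ccontr)
    assume iD: "i \<notin> D"
    define l where "l = k+2+(i-1)*m+0"
    have lV: "l \<in> VV k m" unfolding l_def using pend_V[of "i-1" 0] i m1 by auto
    have ll: "lf k l" unfolding l_def using pend_lf by simp
    have pl: "par k m l = i" unfolding l_def using par_pend[of 0 "i-1"] m1 i by auto
    have nl: "nbhd (VV k m) (EE k m) l = {i}" using nbhd_leaf[OF ll lV] pl by simp
    have Dc: "connected_on (VV k m) (EE k m) D" and Dd: "\<forall>v\<in>VV k m - D. \<exists>u\<in>D. EE k m v u"
      using D unfolding connected_dominating_set_def by auto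
    have En: "EE k m x u \<Longrightarrow> u \<in> nbhd (VV k m) (EE k m) x" for x u
      unfolding nbhd_def EE_def by auto
    have lD: "l \<in> D"
    proof (rule ccontr)
      assume "l \<notin> D"
      then obtain u where u: "u \<in> D" "EE k m l u" using Dd lV by blast
      have "u \<in> nbhd (VV k m) (EE k m) l" using En[OF u(2)] .
      then show False using nl iD u(1) by auto
    qed
    obtain y where y: "y \<in> D" "y \<le> 1"
    proof (cases "0 \<in> D")
      case True then show ?thesis using that by blast
    next
      case False
      have 0: "lf k 0" "0 \<in> VV k m" unfolding lf_def VV_def by auto
      have p0: "par k m 0 = 1" unfolding par_def by simp
      obtain u where u: "u \<in> D" "EE k m 0 u" using Dd 0 False by blast
      have "u \<in> nbhd (VV k m) (EE k m) 0" using En[OF u(2)] .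
      then have "u = 1" using nbhd_leaf[OF 0] p0 by auto
      then show ?thesis using that u(1) by auto
    qed
    have "y \<noteq> l" using y unfolding l_def by auto
    then obtain z where z: "z \<in> D" "EE k m l z" using conn_step[OF Dc lD y(1)] by metis
    have "z \<in> nbhd (VV k m) (EE k m) l" using En[OF z(2)] .
    then show False using nl iD z(1) by auto
  qed
qed

lemma gamma: "connected_domination_number (VV k m) (EE k m) = k"
  unfolding connected_domination_number_def
proof (rule Least_equality)
  show "\<exists>D. connected_dominating_set (VV k m) (EE k m) D \<and> card D = k"
    using cds0 by force
next
  fix n assume "\<exists>D. connected_dominating_set (VV k m) (EE k m) D \<and> card D = n"
  then obtain D where D: "connected_dominating_set (VV k m) (EE k m) D" "card D = n" by blast
  have "finite D" using D(1) unfolding connected_dominating_set_def VV_def by (meson finite_lessThan finite_subset)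
  then have "card {1..k} \<le> card D" using cds_lower[OF D(1)] card_mono by blast
  then show "k \<le> n" using D(2) by simp
qed


definition "Miss = (\<lambda>i. k+2+i*m) ` {..<k}"
definition "S0 = VV k m - Miss"

lemma En_nb: "EE k m x u \<Longrightarrow> u \<in> nbhd (VV k m) (EE k m) x"
  unfolding nbhd_def EE_def by auto

lemma Miss_sub: "Miss \<subseteq> VV k m" unfolding Miss_def using pend_V[of _ 0] m1 by auto

lemma card_Miss: "card Miss = k"
proof -
  have "inj_on (\<lambda>i. k+2+i*m) {..<k}" using m1 unfolding inj_on_def by auto
  then show ?thesis unfolding Miss_def by (simp add: card_image)
qed

lemma S0_props: "connected_forcing_set (VV k m) (EE k m) S0 \<and> card S0 = k*m+2"
proof -
  have sub: "S0 \<subseteq> VV k m" unfolding S0_def by auto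
  have int: "{1..k} \<subseteq> S0" unfolding S0_def Miss_def using int_V by auto
  have cS: "card S0 = k*m+2"
    unfolding S0_def using card_Diff_subset[OF _ Miss_sub] card_Miss unfolding VV_def
    by (metis Miss_sub VV_def add.commute add_diff_cancel_left' card_lessThan diff_add_inverse2 finite_subset finite_lessThan add.assoc)
  have "x \<in> forcing_closure (VV k m) (EE k m) S0" if x: "x \<in> VV k m" for x
  proof (cases "x \<in> Miss")
    case False then show ?thesis using x unfolding S0_def by (auto intro: forcing_closure.init)
  next
    case True
    then obtain i where i: "i < k" "x = k+2+i*m" unfolding Miss_def by auto
    have px: "par k m x = i+1" using par_pend[of 0 i] m1 i by simp
    have lx: "lf k x" using i pend_lf by simp
    have iS: "i+1 \<in> S0" using int i by auto
    have EE1: "EE k m x (i+1)" using EE_leaf[OF lx x] px by simp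
    then have EE2: "EE k m (i+1) x" using graphV unfolding graph_def by blast
    have "u \<in> forcing_closure (VV k m) (EE k m) S0"
      if u: "u \<in> nbhd (VV k m) (EE k m) (i+1)" "u \<noteq> x" for u
    proof -
      have uV: "u \<in> VV k m" and Eu: "EE k m (i+1) u" using u unfolding nbhd_def by auto
      have "u \<notin> Miss"
      proof
        assume "u \<in> Miss"
        then obtain i' where i': "i' < k" "u = k+2+i'*m" unfolding Miss_def by auto
        have pu: "par k m u = i'+1" using par_pend[of 0 i'] m1 i' by simp
        have lu: "lf k u" using i' pend_lf by simp
        have "EE k m u (i+1)" using Eu graphV unfolding graph_def by blast
        then have "i+1 \<in> nbhd (VV k m) (EE k m) u" by (rule En_nb)
        then have "i' = i" using nbhd_leaf[OF lu uV] pu by auto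
        then show False using i i' u(2) by simp
      qed
      then show ?thesis using uV unfolding S0_def by (auto intro: forcing_closure.init)
    qed
    moreover have "i+1 \<in> forcing_closure (VV k m) (EE k m) S0" using iS by (rule forcing_closure.init)
    ultimately show ?thesis using forcing_closure.force[of "i+1" "VV k m" "EE k m" S0 x] En_nb[OF EE2] by blast
  qed
  then show ?thesis unfolding connected_forcing_set_def forcing_set_def
    using sub conn_T[OF sub int] cS by blast
qed


lemma sep:
  assumes iS: "i \<notin> S" and r: "(\<lambda>a b. a\<in>S \<and> b\<in>S \<and> EE k m a b)\<^sup>*\<^sup>* a b"
    and la: "if lf k a then par k m a < i else a < i"
  shows "if lf k b then par k m b < i else b < i"
  using r la
proof (induction rule: rtranclp_induct)
  case base then show ?case by simp
next
  case (step y z)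
  have zi: "z \<noteq> i" using step.hyps(2) iS by auto
  have yV: "y \<in> VV k m" and zV: "z \<in> VV k m" and E: "lnk k m y z \<or> lnk k m z y"
    using step.hyps(2) unfolding EE_def by auto
  have ly: "if lf k y then par k m y < i else y < i" using step.IH step.prems by blast
  have pry: "lf k y \<Longrightarrow> 1 \<le> par k m y \<and> par k m y \<le> k" using par_range yV by blast
  have prz: "lf k z \<Longrightarrow> 1 \<le> par k m z \<and> par k m z \<le> k" using par_range zV by blast
  show ?case
  proof (cases "lnk k m y z")
    case True
    then show ?thesis
    proof (cases "lf k y")
      case True
      then have "z = par k m y" using \<open>lnk k m y z\<close> int_nonleaf[of y] unfolding lnk_def by auto
      then show ?thesis using True ly pry int_nonleaf by auto
    next
      case False
      then have "1 \<le> y \<and> z = y+1 \<and> z \<le> k" using \<open>lnk k m y z\<close> unfolding lnk_def by auto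
      then show ?thesis using False ly zi int_nonleaf[of z] by auto
    qed
  next
    case False
    then have L: "lnk k m z y" using E by blast
    show ?thesis
    proof (cases "lf k z")
      case True
      then have "y = par k m z" using L int_nonleaf[of z] unfolding lnk_def by auto
      then show ?thesis using True ly prz int_nonleaf by auto
    next
      case False
      then have "1 \<le> z \<and> y = z+1 \<and> y \<le> k" using L unfolding lnk_def by auto
      then show ?thesis using False ly int_nonleaf[of y] by auto
    qed
  qed
qed

lemma fc_lower:
  assumes S: "connected_forcing_set (VV k m) (EE k m) S"
  shows "k*m+2 \<le> card S"
proof -
  have SV: "S \<subseteq> VV k m" and cl: "VV k m \<subseteq> forcing_closure (VV k m) (EE k m) S"
    and Sc: "connected_on (VV k m) (EE k m) S"
    using S unfolding connected_forcing_set_def forcing_set_def by auto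
  have two: "x \<in> S \<or> y \<in> S" if "lf k x" "lf k y" "x \<in> VV k m" "y \<in> VV k m"
     "par k m x = par k m y" "x \<noteq> y" for x y
  proof (rule ccontr)
    assume "\<not> (x \<in> S \<or> y \<in> S)"
    then have "x \<notin> forcing_closure (VV k m) (EE k m) S"
      using closure_two_leaves[OF graphV nbhd_leaf[OF that(1,3)]] nbhd_leaf[OF that(2,4)] that(5,6)
      by auto
    then show False using cl that(3) by blast
  qed
  have z: "lf k 0" "0 \<in> VV k m" "par k m 0 = 1" unfolding lf_def VV_def par_def by auto
  have z2: "lf k (k+1)" "k+1 \<in> VV k m" "par k m (k+1) = k" unfolding lf_def VV_def par_def using k1 by auto
  have f1: "lf k (k+2+0*m+0)" "k+2+0*m+0 \<in> VV k m" "par k m (k+2+0*m+0) = 1"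
    using pend_V[of 0 0] par_pend[of 0 0] k1 m1 by (auto simp: lf_def)
  have fk: "lf k (k+2+(k-1)*m+0)" "k+2+(k-1)*m+0 \<in> VV k m" "par k m (k+2+(k-1)*m+0) = k"
    using pend_V[of "k-1" 0] par_pend[of 0 "k-1"] k1 m1 by (auto simp: lf_def)
  obtain a b where ab: "a \<in> S" "b \<in> S" "a \<noteq> b" "lf k a" "lf k b" "a \<in> VV k m" "b \<in> VV k m"
    "par k m a = 1" "par k m b = k"
  proof (cases "k = 1")
    case True
    have f1': "lf k (k+2)" "k+2 \<in> VV k m" "par k m (k+2) = 1" using f1 by auto
    have d: "0 \<noteq> k+1" "0 \<noteq> k+2" "k+1 \<noteq> k+2" by auto
    show ?thesis
    proof (cases "0 \<in> S")
      case True
      then have "k+1 \<in> S \<or> k+2 \<in> S" using two[OF z2(1) f1'(1) z2(2) f1'(2)] z2 f1' \<open>k=1\<close> by auto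
      then show ?thesis using that True z z2 f1' \<open>k=1\<close> d by metis
    next
      case False
      then have "k+1 \<in> S" "k+2 \<in> S" using two[OF z(1) z2(1) z(2) z2(2)] two[OF z(1) f1'(1) z(2) f1'(2)] z z2 f1' \<open>k=1\<close> by auto
      then show ?thesis using that z2 f1' \<open>k=1\<close> d by metis
    qed
  next
    case False
    have d1: "0 \<noteq> k+2+0*m+0" by simp
    have d2: "k+1 \<noteq> k+2+(k-1)*m+0" by simp
    obtain a where a: "a \<in> S" "lf k a" "a \<in> VV k m" "par k m a = 1"
      using two[OF z(1) f1(1) z(2) f1(2)] z f1 d1 by metis
    obtain b where b: "b \<in> S" "lf k b" "b \<in> VV k m" "par k m b = k"
      using two[OF z2(1) fk(1) z2(2) fk(2)] z2 fk d2 by metis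
    have "a \<noteq> b" using a b False by auto
    then show ?thesis using that a b by blast
  qed
  have int: "{1..k} \<subseteq> S"
  proof
    fix i assume i: "i \<in> {1..k}"
    show "i \<in> S"
    proof (rule ccontr)
      assume iS: "i \<notin> S"
      have En: "EE k m x u \<Longrightarrow> u \<in> nbhd (VV k m) (EE k m) x" for x u by (rule En_nb)
      show False
      proof (cases "i = 1 \<or> i = k")
        case True
        then obtain c d where cd: "c \<in> S" "d \<in> S" "c \<noteq> d" "lf k c" "c \<in> VV k m" "par k m c = i"
          using ab by metis
        obtain u where u: "u \<in> S" "EE k m c u" using conn_step[OF Sc cd(1,2,3)] by blast
        have "u \<in> nbhd (VV k m) (EE k m) c" using En[OF u(2)] .
        then have "u = i" using nbhd_leaf[OF cd(4,5)] cd(6) by auto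
        then show False using u(1) iS by simp
      next
        case False
        then have ii: "1 < i" "i < k" using i by auto
        have r: "(\<lambda>x y. x\<in>S \<and> y\<in>S \<and> EE k m x y)\<^sup>*\<^sup>* a b"
          using Sc ab(1,2) unfolding connected_on_def by blast
        have "if lf k b then par k m b < i else b < i"
          using sep[OF iS r] ab ii by auto
        then show False using ab ii by auto
      qed
    qed
  qed
  have leaves: "lf k x" if "x \<in> VV k m - S" for x
    using that int nonleaf by force
  have inj: "inj_on (par k m) (VV k m - S)"
  proof (rule inj_onI)
    fix x y assume x: "x \<in> VV k m - S" and y: "y \<in> VV k m - S" and e: "par k m x = par k m y"
    show "x = y" using two[OF leaves[OF x] leaves[OF y]] x y e by auto
  qed
  have img: "par k m ` (VV k m - S) \<subseteq> {1..k}" using par_range leaves by auto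
  have "card (VV k m - S) \<le> k"
    using card_inj_on_le[OF inj img] by simp
  moreover have "card (VV k m - S) = card (VV k m) - card S"
    using card_Diff_subset[of S "VV k m"] SV finite_subset[OF SV] unfolding VV_def by auto
  moreover have "card S \<le> card (VV k m)" using card_mono[OF _ SV] unfolding VV_def by simp
  moreover have "card (VV k m) = k+2+k*m" unfolding VV_def by simp
  ultimately show ?thesis by linarith
qed

lemma Fc: "connected_forcing_number (VV k m) (EE k m) = k*m+2"
  unfolding connected_forcing_number_def
proof (rule Least_equality)
  show "\<exists>S. connected_forcing_set (VV k m) (EE k m) S \<and> card S = k*m+2" using S0_props by blast
next
  fix n assume "\<exists>S. connected_forcing_set (VV k m) (EE k m) S \<and> card S = n"
  then show "k*m+2 \<le> n" using fc_lower by blast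
qed

end

theorem proposition4:
  fixes k \<Delta> :: nat
  assumes "k \<ge> 1" and "\<Delta> \<ge> 3"
  shows "\<exists>(V :: nat set) E. connected_graph V E \<and> max_degree_eq V E \<Delta> \<and>
           connected_domination_number V E = k \<and>
           connected_forcing_number V E = connected_domination_number V E * (\<Delta> - 2) + 2"
proof -
  define m where "m = \<Delta> - 2"
  have m1: "m \<ge> 1" and D: "\<Delta> = m + 2" using assms unfolding m_def by auto
  show ?thesis
    using connG[OF assms(1) m1] maxdeg[OF assms(1) m1] gamma[OF assms(1) m1] Fc[OF assms(1) m1] D
    by (metis m_def mult.commute)
qed

end
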